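(* Let $G=(V,E,p,(V_{E},V_{O}))$ be a parity game, let $D$ be an Odd-dominion of $G$, and let $D'\subseteq D$ be nonempty such that for every edge $(u,w)\in E$ with $u\in D'$ and $w\in D\setminus D'$ we have $u\in V_{E}$. Let $U\subseteq V$ be such that $G\cap U$ is a parity game (every vertex of $U$ has a successor in $U$), $D'\subseteq U$ and $U\cap(D\setminus D')=\emptyset$. Then $D'$ is an Odd-dominion of $G\cap U$.
   Context: A parity game $G=(V,E,p,(V_{E},V_{O}))$: finite $V$ partitioned into $V_{E}$ (Even) and $V_{O}$ (Odd), total edge relation $E$, priorities $p:V\to\mathbb{N}$. Plays are infinite paths; Even wins iff the least priority occurring infinitely often is even. $G\cap U$ denotes the game restricted to vertex set $U$ with edges $E\cap(U\times U)$. A set $D$ is an Odd-dominion of a game if Odd has a strategy in that game such that every play starting in $D$ consistent with it is won by Odd and stays in $D$. *)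

theory Defs
  imports Main
begin

text \<open>A parity game is given by a vertex set V, an edge relation E, a priority
function p and the set VE of vertices owned by Even; Odd owns V - VE.\<close>

definition parity_game :: "'v set \<Rightarrow> ('v \<times> 'v) set \<Rightarrow> ('v \<Rightarrow> nat) \<Rightarrow> 'v set \<Rightarrow> bool" where
  "parity_game V E p VE \<longleftrightarrow> finite V \<and> E \<subseteq> V \<times> V \<and> VE \<subseteq> V \<and>
     (\<forall>v\<in>V. \<exists>w. (v, w) \<in> E)"

definition odd_strategy :: "'v set \<Rightarrow> ('v \<times> 'v) set \<Rightarrow> 'v set \<Rightarrow> ('v list \<Rightarrow> 'v) \<Rightarrow> bool" where
  "odd_strategy V E VE \<sigma> \<longleftrightarrow>
     (\<forall>h. h \<noteq> [] \<and> last h \<in> V - VE \<longrightarrow> (last h, \<sigma> h) \<in> E)"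

definition consistent_play :: "'v set \<Rightarrow> ('v \<times> 'v) set \<Rightarrow> 'v set \<Rightarrow> ('v list \<Rightarrow> 'v)
    \<Rightarrow> 'v \<Rightarrow> (nat \<Rightarrow> 'v) \<Rightarrow> bool" where
  "consistent_play V E VE \<sigma> v \<rho> \<longleftrightarrow>
     \<rho> 0 = v \<and> (\<forall>i. (\<rho> i, \<rho> (Suc i)) \<in> E) \<and>
     (\<forall>i. \<rho> i \<in> V - VE \<longrightarrow> \<rho> (Suc i) = \<sigma> (map \<rho> [0..<Suc i]))"

definition odd_wins :: "('v \<Rightarrow> nat) \<Rightarrow> (nat \<Rightarrow> 'v) \<Rightarrow> bool" where
  "odd_wins p \<rho> \<longleftrightarrow> odd (LEAST k. \<exists>\<^sub>\<infinity>i. p (\<rho> i) = k)"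

definition odd_dominion :: "'v set \<Rightarrow> ('v \<times> 'v) set \<Rightarrow> ('v \<Rightarrow> nat) \<Rightarrow> 'v set \<Rightarrow> 'v set \<Rightarrow> bool" where
  "odd_dominion V E p VE D \<longleftrightarrow> D \<subseteq> V \<and>
     (\<exists>\<sigma>. odd_strategy V E VE \<sigma> \<and>
        (\<forall>v\<in>D. \<forall>\<rho>. consistent_play V E VE \<sigma> v \<rho> \<longrightarrow>
            (\<forall>i. \<rho> i \<in> D) \<and> odd_wins p \<rho>))"

end

theory Submission
  imports Defs
begin

primrec ext_hist :: "'v list \<Rightarrow> ('v list \<Rightarrow> 'v) \<Rightarrow> nat \<Rightarrow> 'v list" where
  "ext_hist h f 0 = h"
| "ext_hist h f (Suc n) = ext_hist h f n @ [f (ext_hist h f n)]"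

lemma ext_hist_len: "length (ext_hist h f n) = length h + n"
  by (induction n) auto

lemma ext_hist_mono: "k < length (ext_hist h f n) \<Longrightarrow> ext_hist h f (n + j) ! k = ext_hist h f n ! k"
proof (induction j)
  case 0 then show ?case by simp
next
  case (Suc j)
  have "k < length (ext_hist h f (n + j))" using Suc.prems by (simp add: ext_hist_len)
  then show ?case using Suc by (simp add: nth_append)
qed

lemma ext_hist_diag:
  assumes "k < length h + n" and "h \<noteq> []"
  shows "ext_hist h f k ! k = ext_hist h f n ! k"
proof (cases "k \<le> n")
  case True
  have "k < length (ext_hist h f k)" using assms by (simp add: ext_hist_len)
  hence "ext_hist h f (k + (n - k)) ! k = ext_hist h f k ! k" by (rule ext_hist_mono)
  thus ?thesis using True by simp
next
  case False
  have "k < length (ext_hist h f n)" using assms by (simp add: ext_hist_len)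
  hence "ext_hist h f (n + (k - n)) ! k = ext_hist h f n ! k" by (rule ext_hist_mono)
  thus ?thesis using False by simp
qed

lemma extend_play:
  assumes strat: "odd_strategy V E VE \<sigma>" and EV: "E \<subseteq> V \<times> V" and tot: "\<forall>v\<in>V. \<exists>w. (v,w)\<in>E"
    and hne: "h \<noteq> []" and hV: "set h \<subseteq> V"
    and hc: "\<forall>j. Suc j < length h \<longrightarrow> (h!j, h!Suc j) \<in> E \<and>
               (h!j \<in> V - VE \<longrightarrow> h!Suc j = \<sigma> (take (Suc j) h))"
  shows "\<exists>\<rho>. consistent_play V E VE \<sigma> (h!0) \<rho> \<and> (\<forall>k<length h. \<rho> k = h!k)"
proof -
  define f where "f = (\<lambda>l. if last l \<in> V - VE then \<sigma> l else (SOME w. (last l, w) \<in> E))"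
  define \<rho> where "\<rho> = (\<lambda>k. ext_hist h f k ! k)"
  have r1: "\<rho> k = ext_hist h f n ! k" if "k < length h + n" for k n
    using ext_hist_diag[OF that hne] by (simp add: \<rho>_def)
  have rmap: "map \<rho> [0..<length h + n] = ext_hist h f n" for n
  proof (rule nth_equalityI)
    show "length (map \<rho> [0..<length h + n]) = length (ext_hist h f n)" by (simp add: ext_hist_len)
    fix i assume "i < length (map \<rho> [0..<length h + n])"
    hence i: "i < length h + n" by simp
    show "map \<rho> [0..<length h + n] ! i = ext_hist h f n ! i" using r1[OF i] i by simp
  qed
  have rh: "\<rho> k = h!k" if "k < length h" for k
    using r1[of k 0] that by simp
  have rnext: "\<rho> (length h + n) = f (map \<rho> [0..<length h + n])" for n
  proof -
    have "\<rho> (length h + n) = ext_hist h f (Suc n) ! (length h + n)" by (rule r1) simp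
    also have "\<dots> = f (ext_hist h f n)" by (simp add: nth_append ext_hist_len)
    finally show ?thesis by (simp add: rmap)
  qed
  have fE: "(last l, f l) \<in> E" if "l \<noteq> []" "last l \<in> V" for l
  proof (cases "last l \<in> V - VE")
    case True thus ?thesis using strat that unfolding odd_strategy_def f_def by auto
  next
    case False
    then show ?thesis using tot that unfolding f_def by (auto intro: someI_ex)
  qed
  have rsuc: "\<rho> (Suc i) = f (map \<rho> [0..<Suc i])" if "\<not> Suc i < length h" for i
  proof -
    define n where "n = Suc i - length h"
    have n: "Suc i = length h + n" using that unfolding n_def by simp
    have "\<rho> (length h + n) = f (map \<rho> [0..<length h + n])" by (rule rnext)
    thus ?thesis by (simp only: n)
  qed
  have lastmap: "last (map \<rho> [0..<Suc i]) = \<rho> i" for i by simp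
  have rV: "\<rho> k \<in> V" for k
  proof (induction k)
    case 0
    have "h ! 0 \<in> set h" using hne by simp
    thus ?case using rh[of 0] hne hV by auto
  next
    case (Suc i)
    show ?case
    proof (cases "Suc i < length h")
      case True
      hence "h ! Suc i \<in> set h" by simp
      thus ?thesis using rh[OF True] hV by auto
    next
      case False
      have "(\<rho> i, \<rho> (Suc i)) \<in> E" using fE[of "map \<rho> [0..<Suc i]"] Suc rsuc[OF False] by simp
      thus ?thesis using EV by auto
    qed
  qed
  have tk: "take (Suc j) h = map \<rho> [0..<Suc j]" if "Suc j < length h" for j
    using that by (intro nth_equalityI) (auto simp: rh simp del: upt_Suc)
  have "consistent_play V E VE \<sigma> (h!0) \<rho>"
    unfolding consistent_play_def
  proof (intro conjI allI impI)
    show "\<rho> 0 = h ! 0" using rh hne by simp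
  next
    fix i
    show "(\<rho> i, \<rho> (Suc i)) \<in> E"
    proof (cases "Suc i < length h")
      case True thus ?thesis using hc rh by simp
    next
      case False
      thus ?thesis using fE[of "map \<rho> [0..<Suc i]"] rV rsuc[OF False] by simp
    qed
  next
    fix i assume a: "\<rho> i \<in> V - VE"
    show "\<rho> (Suc i) = \<sigma> (map \<rho> [0..<Suc i])"
    proof (cases "Suc i < length h")
      case True thus ?thesis using hc rh tk a by simp
    next
      case False
      thus ?thesis using rsuc[OF False] a by (simp add: f_def)
    qed
  qed
  thus ?thesis using rh by blast
qed

theorem lemma7:
  fixes V :: "'v set" and E :: "('v \<times> 'v) set" and p :: "'v \<Rightarrow> nat" and VE :: "'v set"
    and D D' U :: "'v set"
  assumes "parity_game V E p VE"
    and "odd_dominion V E p VE D"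
    and "D' \<subseteq> D" and "D' \<noteq> {}"
    and "\<forall>u w. (u, w) \<in> E \<and> u \<in> D' \<and> w \<in> D - D' \<longrightarrow> u \<in> VE"
    and "U \<subseteq> V"
    and "parity_game U (E \<inter> (U \<times> U)) p (VE \<inter> U)"
    and "D' \<subseteq> U" and "U \<inter> (D - D') = {}"
  shows "odd_dominion U (E \<inter> (U \<times> U)) p (VE \<inter> U) D'"
proof -
  note pg = assms(1)[unfolded parity_game_def] and pgU = assms(7)[unfolded parity_game_def]
  obtain \<sigma> where strat: "odd_strategy V E VE \<sigma>" and dom: "\<forall>v\<in>D. \<forall>\<rho>. consistent_play V E VE \<sigma> v \<rho> \<longrightarrow>
            (\<forall>i. \<rho> i \<in> D) \<and> odd_wins p \<rho>"
    using assms(2) unfolding odd_dominion_def by blast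
  define \<sigma>' where "\<sigma>' = (\<lambda>h. if (last h, \<sigma> h) \<in> E \<inter> (U \<times> U) then \<sigma> h
                              else (SOME w. (last h, w) \<in> E \<inter> (U \<times> U)))"
  have strat': "odd_strategy U (E \<inter> (U \<times> U)) (VE \<inter> U) \<sigma>'"
    unfolding odd_strategy_def
  proof (intro allI impI)
    fix h :: "'v list" assume h: "h \<noteq> [] \<and> last h \<in> U - VE \<inter> U"
    show "(last h, \<sigma>' h) \<in> E \<inter> (U \<times> U)"
    proof (cases "(last h, \<sigma> h) \<in> E \<inter> (U \<times> U)")
      case True thus ?thesis by (simp add: \<sigma>'_def)
    next
      case False
      have "\<exists>w. (last h, w) \<in> E \<inter> (U \<times> U)" using pgU h by blast
      hence "(last h, SOME w. (last h, w) \<in> E \<inter> (U \<times> U)) \<in> E \<inter> (U \<times> U)" by (rule someI_ex)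
      moreover have "\<sigma>' h = (SOME w. (last h, w) \<in> E \<inter> (U \<times> U))"
        using False unfolding \<sigma>'_def by (simp only: if_False)
      ultimately show ?thesis by (simp only:)
    qed
  qed
  have ext: "\<exists>\<rho>'. consistent_play V E VE \<sigma> (\<rho> 0) \<rho>' \<and> (\<forall>k<m. \<rho>' k = \<rho> k)"
    if "0 < m" "\<forall>k. \<rho> k \<in> V" "\<forall>j. Suc j < m \<longrightarrow> (\<rho> j, \<rho> (Suc j)) \<in> E \<and>
        (\<rho> j \<in> V - VE \<longrightarrow> \<rho> (Suc j) = \<sigma> (map \<rho> [0..<Suc j]))" for \<rho> m
  proof -
    have tk: "take (Suc j) (map \<rho> [0..<m]) = map \<rho> [0..<Suc j]" if "Suc j < m" for j
      using that by (intro nth_equalityI) (auto simp del: upt_Suc)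
    have "\<exists>\<rho>'. consistent_play V E VE \<sigma> (map \<rho> [0..<m] ! 0) \<rho>' \<and>
             (\<forall>k<length (map \<rho> [0..<m]). \<rho>' k = map \<rho> [0..<m] ! k)"
      apply (rule extend_play[OF strat])
      using pg that tk by auto
    thus ?thesis using \<open>0 < m\<close> by auto
  qed
  show ?thesis unfolding odd_dominion_def
  proof (intro conjI exI[of _ \<sigma>'] strat' ballI allI impI)
    show "D' \<subseteq> U" by fact
  next
    fix v \<rho> assume v: "v \<in> D'" and cp: "consistent_play U (E \<inter> (U \<times> U)) (VE \<inter> U) \<sigma>' v \<rho>"
    have r0: "\<rho> 0 = v" and rE: "\<And>i. (\<rho> i, \<rho> (Suc i)) \<in> E \<inter> (U \<times> U)"
      and rs: "\<And>i. \<rho> i \<in> U - VE \<inter> U \<Longrightarrow> \<rho> (Suc i) = \<sigma>' (map \<rho> [0..<Suc i])"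
      using cp unfolding consistent_play_def by auto
    have rU: "\<rho> i \<in> U" for i using rE[of i] by auto
    have rV: "\<forall>k. \<rho> k \<in> V" using rU assms(6) by auto
    have vD: "v \<in> D" using v assms(3) by auto
    have Q: "(\<forall>j<n. \<rho> j \<in> V - VE \<longrightarrow> \<rho> (Suc j) = \<sigma> (map \<rho> [0..<Suc j])) \<and> \<rho> n \<in> D'" for n
    proof (induction n)
      case 0 thus ?case using r0 v by simp
    next
      case (Suc n)
      hence IH1: "\<forall>j<n. \<rho> j \<in> V - VE \<longrightarrow> \<rho> (Suc j) = \<sigma> (map \<rho> [0..<Suc j])"
        and IH2: "\<rho> n \<in> D'" by auto
      show ?case
      proof (cases "\<rho> n \<in> VE")
        case True
        obtain \<rho>' where c: "consistent_play V E VE \<sigma> (\<rho> 0) \<rho>'" and ag: "\<forall>k<Suc (Suc n). \<rho>' k = \<rho> k"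
        proof -
          have "\<forall>j. Suc j < Suc (Suc n) \<longrightarrow> (\<rho> j, \<rho> (Suc j)) \<in> E \<and>
            (\<rho> j \<in> V - VE \<longrightarrow> \<rho> (Suc j) = \<sigma> (map \<rho> [0..<Suc j]))"
          proof (intro allI impI conjI)
            fix j assume j: "Suc j < Suc (Suc n)"
            show "(\<rho> j, \<rho> (Suc j)) \<in> E" using rE[of j] by simp
            assume "\<rho> j \<in> V - VE"
            then have "j < n" using j True by (cases "j = n") auto
            then show "\<rho> (Suc j) = \<sigma> (map \<rho> [0..<Suc j])" using IH1 \<open>\<rho> j \<in> V - VE\<close> by blast
          qed
          then show ?thesis using ext[of "Suc (Suc n)" \<rho>] rV that by blast
        qed
        have "\<rho>' (Suc n) \<in> D" using dom c r0 vD by blast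
        hence "\<rho> (Suc n) \<in> D" using ag by simp
        hence "\<rho> (Suc n) \<in> D'" using rU[of "Suc n"] assms(9) by blast
        thus ?thesis using IH1 True by (auto simp: less_Suc_eq)
      next
        case False
        obtain \<rho>' where c: "consistent_play V E VE \<sigma> (\<rho> 0) \<rho>'" and ag: "\<forall>k<Suc n. \<rho>' k = \<rho> k"
        proof -
          have "\<forall>j. Suc j < Suc n \<longrightarrow> (\<rho> j, \<rho> (Suc j)) \<in> E \<and>
            (\<rho> j \<in> V - VE \<longrightarrow> \<rho> (Suc j) = \<sigma> (map \<rho> [0..<Suc j]))"
            using IH1 rE by auto
          then show ?thesis using ext[of "Suc n" \<rho>] rV that by blast
        qed
        have odd: "\<rho> n \<in> V - VE" using False rV by auto
        have mp: "map \<rho>' [0..<Suc n] = map \<rho> [0..<Suc n]" using ag by simp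
        have "\<rho>' (Suc n) = \<sigma> (map \<rho>' [0..<Suc n])" using c odd ag unfolding consistent_play_def by simp
        hence s1: "\<rho>' (Suc n) = \<sigma> (map \<rho> [0..<Suc n])" using mp by (simp del: upt_Suc)
        have "\<forall>i. \<rho>' i \<in> D" using dom c r0 vD by blast
        hence inD: "\<sigma> (map \<rho> [0..<Suc n]) \<in> D" using s1 by metis
        have eE: "(\<rho> n, \<sigma> (map \<rho> [0..<Suc n])) \<in> E"
        proof -
          have "last (map \<rho> [0..<Suc n]) = \<rho> n" by simp
          moreover have "map \<rho> [0..<Suc n] \<noteq> []" by simp
          ultimately show ?thesis using strat odd unfolding odd_strategy_def by metis
        qed
        have inD': "\<sigma> (map \<rho> [0..<Suc n]) \<in> D'" using assms(5) eE IH2 False inD by blast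
        hence inU: "\<sigma> (map \<rho> [0..<Suc n]) \<in> U" using assms(8) by blast
        have "\<rho> (Suc n) = \<sigma>' (map \<rho> [0..<Suc n])" using rs rU False by blast
        also have "\<dots> = \<sigma> (map \<rho> [0..<Suc n])" unfolding \<sigma>'_def using eE inU rU[of n] by simp
        finally have eq: "\<rho> (Suc n) = \<sigma> (map \<rho> [0..<Suc n])" .
        show ?thesis using IH1 eq inD' by (auto simp: less_Suc_eq)
      qed
    qed
    show "\<rho> i \<in> D'" for i using Q by blast
    have "consistent_play V E VE \<sigma> v \<rho>"
      unfolding consistent_play_def using r0 rE Q by blast
    thus "odd_wins p \<rho>" using dom vD by blast
  qed
qed

end
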